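(* Let $\lambda>0$, $f:\mathbb{R}^n\to\mathbb{R}$ twice continuously differentiable, $\varphi=f+\lambda\|\cdot\|_1$, and $x^0$ with $\mathcal{L}_\varphi(x^0)$ bounded and $f$ twice uniformly Lipschitz continuously differentiable on an open neighborhood of it. Suppose that at iteration $k$ of PGN2CM (described in the context) a Newton-CG step is invoked and the Capped CG method returns $d_{\rm type}=\mathrm{SOL}$. Define $g^{k+1}_{\neq0\varepsilon}:=(g(x^{k+1}))_{I^{k\varepsilon}_{\neq0}}$, where $I^{k\varepsilon}_{\neq0}=\{i:|x^k_i|>\varepsilon_g^{1/2}\}$. Then $j_k<+\infty$ and $$\varphi(x^k)-\varphi(x^{k+1})\ge c_{sol}\min\{\|g^{k+1}_{\neq0\varepsilon}\|^2\varepsilon_h^{-1},\varepsilon_h^3,\varepsilon_g\varepsilon_h\},$$ where $c_{sol}=\eta\min\Big\{\big(\frac{4}{\sqrt{(\zeta+4\hat\tau)^2+8L_H}+(\zeta+4\hat\tau)}\big)^2,\frac{9(1-\zeta-2\eta)^2\theta^2}{L_H^2},\theta^2,\frac{(1-\zeta)^2\theta^2}{4\max\{L_H/3,2\eta\}^2}\Big\}$.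
   Context: Constants $L_g,L_H,U_g>0$ with, for $x,y\in\mathcal{L}_\varphi(x^0)=\{x:\varphi(x)\le\varphi(x^0)\}$: $\|\nabla^2f(x)(y-x)-(\nabla f(y)-\nabla f(x))\|\le\frac{L_H}2\|y-x\|^2$, $f(y)\le f(x)+\nabla f(x)^\top(y-x)+\frac12(y-x)^\top\nabla^2f(x)(y-x)+\frac{L_H}6\|y-x\|^3$, $\|\nabla f(x)\|\le U_g$, $\|\nabla^2f(x)\|\le L_g$. $\mathrm{sgn}(0)=1$. $g(x)_i=(\nabla f(x))_i+\lambda$ if $x_i>0$, $(\nabla f(x))_i-\lambda$ if $x_i<0$, $(\nabla f(x))_i-\min\{\max\{-\lambda,(\nabla f(x))_i\},\lambda\}$ if $x_i=0$. For $x$: $I^\varepsilon_0=\{i:|x_i|\le\varepsilon_g^{1/2}\}$, $I^\varepsilon_{\neq0}=\{i:|x_i|>\varepsilon_g^{1/2}\}$; $g^\varepsilon(x)_i=(\nabla f(x))_i+\lambda$ if $x_i>\varepsilon_g^{1/2}$, $(\nabla f(x))_i-\lambda$ if $x_i<-\varepsilon_g^{1/2}$, $(\nabla f(x))_i-\min\{\max\{-\lambda-\varepsilon_g^{3/4},(\nabla f(x))_i\},\lambda+\varepsilon_g^{3/4}\}$ otherwise. Capped CG (inputs symmetric $H$, $g$, $\epsilon$, $\zeta\in(0,1)$, $\delta$, $\bar\tau$, $M\ge0$): $\bar H=H+\bar\tau\|g\|^\delta I$, $\kappa=\frac{M+\bar\tau\|g\|^\delta}\epsilon$, $\hat\zeta=\frac\zeta{3\kappa}$,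 $\tau=\frac{\sqrt\kappa}{\sqrt\kappa+1}$, $T=\frac{4\kappa^4}{(1-\sqrt\tau)^2}$, $y_0=0,r_0=g,p_0=-g$; if $p_0^\top\bar Hp_0<\epsilon\|p_0\|^2$ return $(p_0,\mathrm{NC})$; if $\|Hp_0\|>M\|p_0\|$ update $M=\|Hp_0\|/\|p_0\|$ and $\kappa,\hat\zeta,\tau,T$. Loop: $\alpha_j=\|r_j\|^2/p_j^\top\bar Hp_j$, $y_{j+1}=y_j+\alpha_jp_j$, $r_{j+1}=r_j+\alpha_j\bar Hp_j$, $\beta_{j+1}=\|r_{j+1}\|^2/\|r_j\|^2$, $p_{j+1}=-r_{j+1}+\beta_{j+1}p_j$, $j\leftarrow j+1$; update $M$ whenever $\|Hv\|>M\|v\|$ for $v\in\{p_j,y_j,r_j\}$; then if $y_j^\top\bar Hy_j<\epsilon\|y_j\|^2$ return $(y_j,\mathrm{NC})$; elif $\|r_j\|\le\hat\zeta\|r_0\|$ return $(y_j,\mathrm{SOL})$; elif $p_j^\top\bar Hp_j<\epsilon\|p_j\|^2$ return $(p_j,\mathrm{NC})$; elif $\|r_j\|>\sqrt T\tau^{j/2}\|r_0\|$, compute $y_{j+1}$, find $i<j$ with $(y_{j+1}-y_i)^\top\bar H(y_{j+1}-y_i)<\epsilon\|y_{j+1}-y_i\|^2$ and return $(y_{j+1}-y_i,\mathrm{NC})$. Newton-CG step of PGN2CM (parameters $0<\varepsilon_g,\varepsilon_h<1$, $\delta\in[0,1]$, $\hat\tau\ge1$, $\zeta\in(0,1)$,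 $\eta\in(0,\frac{1-\zeta}2)$, $\theta\in(0,1)$), invoked at $x^k$ when [$I^\varepsilon_0(x^k)=\emptyset$ or $g^\varepsilon(x^k)$ vanishes on it], $I^{k\varepsilon}_{\neq0}\neq\emptyset$ and $\|g^\varepsilon(x^k)_{I^{k\varepsilon}_{\neq0}}\|>\varepsilon_g$: with $H^k_{\neq0\varepsilon}=(\nabla^2f(x^k))_{I^{k\varepsilon}_{\neq0}}$, $g^k_{\neq0\varepsilon}=g^\varepsilon(x^k)_{I^{k\varepsilon}_{\neq0}}$, $\tau_k\in[\frac{2\varepsilon_h}{\|g^k_{\neq0\varepsilon}\|^\delta},\frac{2\hat\tau\varepsilon_h}{\|g^k_{\neq0\varepsilon}\|^\delta}]$, call Capped CG$(H^k_{\neq0\varepsilon},g^k_{\neq0\varepsilon},\varepsilon_h,\zeta,\delta,\tau_k,M)$ to get $(d,d_{\rm type})$; $d^k=0$ on $I^\varepsilon_0(x^k)$, $d^k_{I^{k\varepsilon}_{\neq0}}=d$ if SOL (and $-\mathrm{sgn}(d^\top g^k_{\neq0\varepsilon})\frac{|d^\top H^k_{\neq0\varepsilon}d|}{\|d\|^2}\frac d{\|d\|}$ if NC); $x^{k+1}=x^k+\theta^{j_k}d^k$, $j_k$ the smallest nonnegative integer $j$ with $\varphi(x^k+\theta^jd^k)<\varphi(x^k)-\eta\theta^{2j}\varepsilon_h\|d^k\|^2$. The iterates lie in $\mathcal{L}_\varphi(x^0)$. *)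

theory Defs
  imports "HOL-Analysis.Analysis"
begin

text \<open>A subvector indexed by a set I of
coordinates is modelled by the vector that agrees on I and is zero outside I
(an isometric embedding of R^|I|, preserving norms and inner products).\<close>

definition restr :: "'n set \<Rightarrow> real^'n \<Rightarrow> real^'n" where
  "restr I v = (\<chi> i. if i \<in> I then v$i else 0)"

definition l1norm :: "real^'n \<Rightarrow> real" where
  "l1norm v = (\<Sum>i\<in>UNIV. \<bar>v$i\<bar>)"

definition phi :: "(real^'n \<Rightarrow> real) \<Rightarrow> real \<Rightarrow> real^'n \<Rightarrow> real" where
  "phi f lam x = f x + lam * l1norm x"

definition levelset :: "(real^'n \<Rightarrow> real) \<Rightarrow> real \<Rightarrow> real^'n \<Rightarrow> (real^'n) set" where
  "levelset f lam x0 = {x. phi f lam x \<le> phi f lam x0}"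

definition gmap :: "(real^'n \<Rightarrow> real^'n) \<Rightarrow> real \<Rightarrow> real^'n \<Rightarrow> real^'n" where
  "gmap Df lam x = (\<chi> i. if x$i > 0 then Df x $ i + lam
                        else if x$i < 0 then Df x $ i - lam
                        else Df x $ i - min (max (- lam) (Df x $ i)) lam)"

definition I0eps :: "real \<Rightarrow> real^'n \<Rightarrow> 'n set" where
  "I0eps epsg x = {i. \<bar>x$i\<bar> \<le> sqrt epsg}"

definition Inzeps :: "real \<Rightarrow> real^'n \<Rightarrow> 'n set" where
  "Inzeps epsg x = {i. \<bar>x$i\<bar> > sqrt epsg}"

definition geps :: "(real^'n \<Rightarrow> real^'n) \<Rightarrow> real \<Rightarrow> real \<Rightarrow> real^'n \<Rightarrow> real^'n" where
  "geps Df lam epsg x = (\<chi> i. if x$i > sqrt epsg then Df x $ i + lam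
                        else if x$i < - sqrt epsg then Df x $ i - lam
                        else Df x $ i - min (max (- lam - epsg powr (3/4)) (Df x $ i)) (lam + epsg powr (3/4)))"

fun cg_iter :: "(real^'n \<Rightarrow> real^'n) \<Rightarrow> real^'n \<Rightarrow> nat \<Rightarrow> ((real^'n) \<times> (real^'n) \<times> (real^'n))" where
  "cg_iter Hb g 0 = (0, g, - g)"
| "cg_iter Hb g (Suc j) = (case cg_iter Hb g j of (y, r, p) \<Rightarrow>
      let a = (r \<bullet> r) / (p \<bullet> Hb p);
          y' = y + a *\<^sub>R p;
          r' = r + a *\<^sub>R Hb p;
          b = (r' \<bullet> r') / (r \<bullet> r)
      in (y', r', - r' + b *\<^sub>R p))"

definition cg_y :: "(real^'n \<Rightarrow> real^'n) \<Rightarrow> real^'n \<Rightarrow> nat \<Rightarrow> real^'n" where "cg_y Hb g j = fst (cg_iter Hb g j)"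
definition cg_r :: "(real^'n \<Rightarrow> real^'n) \<Rightarrow> real^'n \<Rightarrow> nat \<Rightarrow> real^'n" where "cg_r Hb g j = fst (snd (cg_iter Hb g j))"
definition cg_p :: "(real^'n \<Rightarrow> real^'n) \<Rightarrow> real^'n \<Rightarrow> nat \<Rightarrow> real^'n" where "cg_p Hb g j = snd (snd (cg_iter Hb g j))"

definition Mupd :: "(real^'n \<Rightarrow> real^'n) \<Rightarrow> real \<Rightarrow> real^'n \<Rightarrow> real" where
  "Mupd H M v = (if norm (H v) > M * norm v then norm (H v) / norm v else M)"

text \<open>Value of M in force when the termination tests of iteration j are performed.\<close>
fun cg_M :: "(real^'n \<Rightarrow> real^'n) \<Rightarrow> (real^'n \<Rightarrow> real^'n) \<Rightarrow> real^'n \<Rightarrow> real \<Rightarrow> nat \<Rightarrow> real" where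
  "cg_M H Hb g M0 0 = Mupd H M0 (cg_p Hb g 0)"
| "cg_M H Hb g M0 (Suc j) =
     Mupd H (Mupd H (Mupd H (cg_M H Hb g M0 j) (cg_p Hb g (Suc j))) (cg_y Hb g (Suc j))) (cg_r Hb g (Suc j))"

definition capped_cg_sol ::
  "(real^'n \<Rightarrow> real^'n) \<Rightarrow> real^'n \<Rightarrow> real \<Rightarrow> real \<Rightarrow> real \<Rightarrow> real \<Rightarrow> real \<Rightarrow> real^'n \<Rightarrow> bool" where
  "capped_cg_sol H g eps zeta delta taubar M0 d \<longleftrightarrow>
    (let s = taubar * norm g powr delta;
         Hb = (\<lambda>v. H v + s *\<^sub>R v);
         y = cg_y Hb g; r = cg_r Hb g; p = cg_p Hb g;
         Ms = cg_M H Hb g M0;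
         kappa = (\<lambda>j. (Ms j + s) / eps);
         zhat = (\<lambda>j. zeta / (3 * kappa j));
         tau = (\<lambda>j. sqrt (kappa j) / (sqrt (kappa j) + 1));
         T = (\<lambda>j. 4 * kappa j ^ 4 / (1 - sqrt (tau j))\<^sup>2);
         ncy = (\<lambda>j. y j \<bullet> Hb (y j) < eps * (norm (y j))\<^sup>2);
         sol = (\<lambda>j. norm (r j) \<le> zhat j * norm (r 0));
         ncp = (\<lambda>j. p j \<bullet> Hb (p j) < eps * (norm (p j))\<^sup>2);
         capped = (\<lambda>j. norm (r j) > sqrt (T j) * tau j powr (real j / 2) * norm (r 0))
     in \<not> ncp 0 \<and>
        (\<exists>j\<ge>1. (\<forall>i. 1 \<le> i \<and> i < j \<longrightarrow> \<not> ncy i \<and> \<not> sol i \<and> \<not> ncp i \<and> \<not> capped i)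
               \<and> \<not> ncy j \<and> sol j \<and> d = y j))"

end

theory Submission
  imports Defs
begin


definition supp :: "'n set \<Rightarrow> real^'n \<Rightarrow> bool" where
  "supp I v \<longleftrightarrow> (\<forall>i. i \<notin> I \<longrightarrow> v$i = 0)"

lemma restr_supp: "supp I (restr I v)" by (simp add: supp_def restr_def)
lemma supp_restr: "supp I v \<Longrightarrow> restr I v = v" by (simp add: supp_def restr_def vec_eq_iff)
lemma supp_add: "supp I u \<Longrightarrow> supp I v \<Longrightarrow> supp I (u + v)" by (simp add: supp_def)
lemma supp_scale: "supp I u \<Longrightarrow> supp I (c *\<^sub>R u)" by (simp add: supp_def)
lemma supp_uminus: "supp I u \<Longrightarrow> supp I (- u)" by (simp add: supp_def)
lemma supp_zero: "supp I 0" by (simp add: supp_def)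
lemma restr_add: "restr I (u + v) = restr I u + restr I v" by (simp add: restr_def vec_eq_iff)
lemma restr_scale: "restr I (c *\<^sub>R u) = c *\<^sub>R restr I u" by (simp add: restr_def vec_eq_iff)
lemma restr_uminus: "restr I (- u) = - restr I u" by (simp add: restr_def vec_eq_iff)
lemma restr_diff: "restr I (u - v) = restr I u - restr I v" by (simp add: restr_def vec_eq_iff)
lemma restr_zero: "restr I 0 = 0" by (simp add: restr_def vec_eq_iff)

lemma supp_inner_restr: "supp I u \<Longrightarrow> u \<bullet> restr I w = u \<bullet> w"
  unfolding inner_vec_def supp_def restr_def
  by (intro sum.cong) auto

lemma norm_restr_le: "norm (restr I v) \<le> norm v"
  unfolding norm_le inner_vec_def restr_def
  by (intro sum_mono) auto

lemma cg_iter_Suc: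
  "cg_y Hb g (Suc j) = cg_y Hb g j + ((cg_r Hb g j \<bullet> cg_r Hb g j) / (cg_p Hb g j \<bullet> Hb (cg_p Hb g j))) *\<^sub>R cg_p Hb g j"
  "cg_r Hb g (Suc j) = cg_r Hb g j + ((cg_r Hb g j \<bullet> cg_r Hb g j) / (cg_p Hb g j \<bullet> Hb (cg_p Hb g j))) *\<^sub>R Hb (cg_p Hb g j)"
  "cg_p Hb g (Suc j) = - cg_r Hb g (Suc j) + ((cg_r Hb g (Suc j) \<bullet> cg_r Hb g (Suc j)) / (cg_r Hb g j \<bullet> cg_r Hb g j)) *\<^sub>R cg_p Hb g j"
  by (simp_all add: cg_y_def cg_r_def cg_p_def Let_def split: prod.split)

lemma cg_iter_0: "cg_y Hb g 0 = 0" "cg_r Hb g 0 = g" "cg_p Hb g 0 = - g"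
  by (simp_all add: cg_y_def cg_r_def cg_p_def)

lemma cg_supp:
  assumes "supp I g" "\<And>v. supp I v \<Longrightarrow> supp I (Hb v)"
  shows "supp I (cg_y Hb g j) \<and> supp I (cg_r Hb g j) \<and> supp I (cg_p Hb g j)"
proof (induction j)
  case 0 then show ?case using assms by (simp add: cg_iter_0 supp_zero supp_uminus)
next
  case (Suc j)
  have r: "supp I (cg_r Hb g (Suc j))" using Suc assms
    by (simp only: cg_iter_Suc) (intro supp_add supp_scale; simp)
  have y: "supp I (cg_y Hb g (Suc j))" using Suc assms
    by (simp only: cg_iter_Suc) (intro supp_add supp_scale; simp)
  have p: "supp I (cg_p Hb g (Suc j))" using Suc r
    by (subst cg_iter_Suc(3)) (intro supp_add supp_scale supp_uminus; simp)
  show ?case using r y p by simp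
qed

lemma cg_res:
  assumes "\<And>u v. Hb (u + v) = Hb u + Hb v" "\<And>c v. Hb (c *\<^sub>R v) = c *\<^sub>R Hb v"
  shows "cg_r Hb g j = Hb (cg_y Hb g j) + g"
proof (induction j)
  case 0
  have "Hb 0 = 0" using assms(2)[of 0 0] by simp
  then show ?case by (simp add: cg_iter_0)
next
  case (Suc j)
  then show ?case by (simp add: cg_iter_Suc assms)
qed

lemma Mupd_ge: "H 0 = 0 \<Longrightarrow> M \<le> Mupd H M v"
  unfolding Mupd_def
proof (cases "norm (H v) > M * norm v")
  case True
  assume H0: "H 0 = 0"
  have "norm v \<noteq> 0" using True H0 by auto
  then have "norm v > 0" by simp
  then show "M \<le> (if M * norm v < norm (H v) then norm (H v) / norm v else M)"
    using True by (simp add: pos_le_divide_eq)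
qed simp

lemma Mupd_bound: "H 0 = 0 \<Longrightarrow> norm (H v) \<le> Mupd H M v * norm v"
  unfolding Mupd_def
proof (cases "norm (H v) > M * norm v")
  case True
  assume H0: "H 0 = 0"
  have "norm v \<noteq> 0" using True H0 by auto
  then show "norm (H v) \<le> (if M * norm v < norm (H v) then norm (H v) / norm v else M) * norm v"
    using True by simp
qed simp

lemma cgM_ge: "H 0 = 0 \<Longrightarrow> Mz \<le> cg_M H Hb g Mz j"
proof (induction j)
  case 0 then show ?case by (simp add: Mupd_ge)
next
  case (Suc j)
  then show ?case by (simp del: Mupd_def) (meson Mupd_ge order_trans)
qed

lemma cgM_y: "H 0 = 0 \<Longrightarrow> norm (H (cg_y Hb g (Suc j))) \<le> cg_M H Hb g Mz (Suc j) * norm (cg_y Hb g (Suc j))"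
proof -
  assume H0: "H 0 = 0"
  let ?A = "Mupd H (cg_M H Hb g Mz j) (cg_p Hb g (Suc j))"
  let ?B = "Mupd H ?A (cg_y Hb g (Suc j))"
  have "norm (H (cg_y Hb g (Suc j))) \<le> ?B * norm (cg_y Hb g (Suc j))" using Mupd_bound[of H, OF H0] by blast
  also have "\<dots> \<le> Mupd H ?B (cg_r Hb g (Suc j)) * norm (cg_y Hb g (Suc j))"
    by (intro mult_right_mono Mupd_ge H0) simp
  finally show ?thesis by simp
qed



lemma key_arith:
  fixes t zeta eps N nd Q s LH eta dr :: real
  assumes t: "0 < t" "t \<le> 1" and N: "N = nd^2" and nd: "nd > 0" and Q: "Q \<ge> eps * N"
    and s: "s > 0" and eps: "eps > 0" and dr: "dr \<le> zeta / 2 * eps * N" and LH: "LH > 0"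
    and tc: "t * nd \<le> 3 * (1 - zeta - 2 * eta) * eps / LH"
    and z: "0 < zeta" "zeta < 1" and e: "0 < eta" "1 - zeta - 2 * eta > 0"
  shows "t * dr - t * Q + t^2 / 2 * (Q - s * N) + LH / 6 * t^3 * nd^3 < - eta * t^2 * eps * N"
proof -
  have Npos: "N > 0" using N nd by simp
  have a: "t - t^2/2 \<ge> 0" using t by (simp add: power2_eq_square)
  have 1: "-(t - t^2/2) * Q \<le> -(t - t^2/2) * (eps * N)" using mult_left_mono[OF Q a] by linarith
  have "LH * (t * nd) \<le> 3 * (1 - zeta - 2 * eta) * eps" using tc LH by (simp add: pos_le_divide_eq mult.commute)
  then have 2: "LH / 6 * t^3 * nd^3 \<le> (1 - zeta - 2*eta) * eps / 2 * t^2 * N"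
  proof -
    assume h: "LH * (t * nd) \<le> 3 * (1 - zeta - 2 * eta) * eps"
    have "LH / 6 * t^3 * nd^3 = (LH * (t * nd)) / 6 * (t^2 * N)" by (simp add: N power2_eq_square power3_eq_cube)
    also have "\<dots> \<le> (3 * (1 - zeta - 2 * eta) * eps) / 6 * (t^2 * N)"
      using h Npos by (intro mult_right_mono divide_right_mono) auto
    finally show ?thesis by (simp add: algebra_simps)
  qed
  have 3: "t * dr \<le> t * (zeta / 2 * eps * N)" using dr t by (simp add: mult_left_mono)
  have 4: "t^2 / 2 * (s * N) > 0" using t s Npos by simp
  have 5: "t * (zeta / 2 * eps * N) - (t - t^2/2) * (eps * N) + (1 - zeta - 2*eta) * eps / 2 * t^2 * N
        + eta * t^2 * eps * N = eps * N * t * (1 - zeta/2) * (t - 1)"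
    by (simp add: field_simps power2_eq_square)
  have 6: "eps * N * t * (1 - zeta/2) * (t - 1) \<le> 0"
    using eps Npos t z by (intro mult_nonneg_nonpos) auto
  have "t * dr - t * Q + t^2 / 2 * (Q - s * N) + LH / 6 * t^3 * nd^3
      = t * dr - (t - t^2/2) * Q - t^2/2 * (s * N) + LH / 6 * t^3 * nd^3" by (simp add: field_simps)
  then show ?thesis using 1 2 3 4 5 6 by linarith
qed

lemma u0_eq:
  fixes B LH :: real
  assumes "B > 0" "LH > 0"
  shows "LH / 2 * (4 / (sqrt (B^2 + 8 * LH) + B))^2 + B / 2 * (4 / (sqrt (B^2 + 8 * LH) + B)) = 1"
proof -
  define S where "S = sqrt (B^2 + 8 * LH)"
  have nn: "0 \<le> B^2 + 8 * LH" using assms by (smt (verit) zero_le_power2)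
  then have S2: "S^2 = B^2 + 8 * LH" unfolding S_def by simp
  have Sp: "S \<ge> 0" unfolding S_def using nn by simp
  have pos: "S + B > 0" using Sp assms by simp
  have ps: "8 * LH + 2 * B * (S + B) > 0" using pos assms by (simp add: add_pos_pos)
  have "LH / 2 * (4 / (S + B))^2 + B / 2 * (4 / (S + B)) = (8 * LH + 2 * B * (S + B)) / (S + B)^2"
  proof -
    have "\<And>W::real. W > 0 \<Longrightarrow> LH / 2 * (4 / W)^2 + B / 2 * (4 / W) = (8 * LH + 2 * B * W) / W^2"
      by (simp add: field_simps power2_eq_square)
    then show ?thesis using pos by blast
  qed
  also have "(S + B)^2 = 8 * LH + 2 * B * (S + B)" using S2 by (simp add: power2_eq_square algebra_simps)
  finally have "LH / 2 * (4 / (S + B))^2 + B / 2 * (4 / (S + B)) = 1"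
    using pos ps by simp
  then show ?thesis unfolding S_def .
qed



lemma fin0:
  fixes u0 LH B eps nd ngp :: real
  assumes u0: "u0 > 0" "LH / 2 * u0^2 + B / 2 * u0 = 1" and eps: "eps > 0" and nd: "nd \<ge> 0"
    and ng: "ngp \<ge> 0" "ngp \<le> LH / 2 * nd^2 + B / 2 * eps * nd" and B: "B \<ge> 0" and LH: "LH > 0"
  shows "u0^2 * min (ngp^2 / eps) (eps^3) \<le> eps * nd^2"
proof (cases "nd \<ge> u0 * eps")
  case True
  have "u0^2 * min (ngp^2 / eps) (eps^3) \<le> u0^2 * eps^3" by (simp add: mult_left_mono)
  also have "\<dots> = eps * (u0 * eps)^2" by (simp add: power2_eq_square power3_eq_cube)
  also have "\<dots> \<le> eps * nd^2" using True u0 eps by (intro mult_left_mono power_mono) auto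
  finally show ?thesis .
next
  case False
  have "LH / 2 * nd^2 \<le> LH / 2 * (u0 * eps) * nd"
  proof -
    have "nd * nd \<le> (u0 * eps) * nd" using False nd by (intro mult_right_mono) auto
    then show ?thesis using LH by (simp add: power2_eq_square mult.assoc mult_left_mono)
  qed
  then have "ngp \<le> eps * nd * (LH / 2 * u0 + B / 2)" using ng by (simp add: algebra_simps)
  then have "u0 * ngp \<le> u0 * (eps * nd * (LH / 2 * u0 + B / 2))"
    using u0 by (intro mult_left_mono) auto
  also have "\<dots> = eps * nd * (LH / 2 * u0^2 + B / 2 * u0)" by (simp add: algebra_simps power2_eq_square)
  finally have "u0 * ngp \<le> eps * nd * (LH / 2 * u0^2 + B / 2 * u0)" .
  then have h: "u0 * ngp \<le> eps * nd" using u0 by simp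
  have "(u0 * ngp)^2 \<le> (eps * nd)^2" using h u0 ng by (intro power_mono) auto
  then have "u0^2 * ngp^2 / eps \<le> eps * nd^2" using eps
    by (simp add: power_mult_distrib divide_le_eq power2_eq_square algebra_simps)
  moreover have "u0^2 * min (ngp^2 / eps) (eps^3) \<le> u0^2 * (ngp^2 / eps)" by (intro mult_left_mono) auto
  ultimately show ?thesis by (metis order_trans times_divide_eq_right)
qed



theorem lemma10:
  fixes f :: "real^'n \<Rightarrow> real" and Df :: "real^'n \<Rightarrow> real^'n" and Hf :: "real^'n \<Rightarrow> real^'n^'n"
    and lam LH Lg Ug epsg epsh delta tauhat zeta eta theta tauk M :: real
    and x0 xk d :: "real^'n"
  assumes lam: "lam > 0"
    and grad: "\<And>x. (f has_derivative (\<lambda>h. Df x \<bullet> h)) (at x)"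
    and hess: "\<And>x. (Df has_derivative (\<lambda>h. Hf x *v h)) (at x)"
    and hess_cont: "continuous_on UNIV Hf"
    and bnd: "bounded (levelset f lam x0)"
    and lip: "\<exists>U L1 L2. open U \<and> levelset f lam x0 \<subseteq> U \<and>
               (\<forall>x\<in>U. \<forall>y\<in>U. norm (Df x - Df y) \<le> L1 * dist x y \<and>
                               onorm (\<lambda>v. (Hf x - Hf y) *v v) \<le> L2 * dist x y)"
    and cpos: "Lg > 0" "LH > 0" "Ug > 0"
    and LH1: "\<And>x y. x \<in> levelset f lam x0 \<Longrightarrow> y \<in> levelset f lam x0 \<Longrightarrow>
               norm (Hf x *v (y - x) - (Df y - Df x)) \<le> LH / 2 * (norm (y - x))\<^sup>2"
    and LH2: "\<And>x y. x \<in> levelset f lam x0 \<Longrightarrow> y \<in> levelset f lam x0 \<Longrightarrow>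
               f y \<le> f x + Df x \<bullet> (y - x) + 1/2 * ((y - x) \<bullet> (Hf x *v (y - x)))
                     + LH / 6 * (norm (y - x)) ^ 3"
    and Ug: "\<And>x. x \<in> levelset f lam x0 \<Longrightarrow> norm (Df x) \<le> Ug"
    and Lg: "\<And>x. x \<in> levelset f lam x0 \<Longrightarrow> onorm (\<lambda>v. Hf x *v v) \<le> Lg"
    and epsg: "0 < epsg" "epsg < 1" and epsh: "0 < epsh" "epsh < 1"
    and delta: "0 \<le> delta" "delta \<le> 1" and tauhat: "tauhat \<ge> 1"
    and zeta: "0 < zeta" "zeta < 1" and eta: "0 < eta" "eta < (1 - zeta) / 2"
    and theta: "0 < theta" "theta < 1"
    and xk: "xk \<in> levelset f lam x0"
    and inv1: "I0eps epsg xk = {} \<or> (\<forall>i\<in>I0eps epsg xk. geps Df lam epsg xk $ i = 0)"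
    and inv2: "Inzeps epsg xk \<noteq> {}"
    and inv3: "norm (restr (Inzeps epsg xk) (geps Df lam epsg xk)) > epsg"
    and tauk: "2 * epsh / norm (restr (Inzeps epsg xk) (geps Df lam epsg xk)) powr delta \<le> tauk"
              "tauk \<le> 2 * tauhat * epsh / norm (restr (Inzeps epsg xk) (geps Df lam epsg xk)) powr delta"
    and M: "M \<ge> 0"
    and sol: "capped_cg_sol (\<lambda>v. restr (Inzeps epsg xk) (Hf xk *v v))
                (restr (Inzeps epsg xk) (geps Df lam epsg xk)) epsh zeta delta tauk M d"
  shows "(\<exists>j::nat. phi f lam (xk + theta ^ j *\<^sub>R d)
                    < phi f lam xk - eta * theta ^ (2 * j) * epsh * (norm d)\<^sup>2) \<and>
         (let jk = (LEAST j::nat. phi f lam (xk + theta ^ j *\<^sub>R d)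
                    < phi f lam xk - eta * theta ^ (2 * j) * epsh * (norm d)\<^sup>2);
              xk1 = xk + theta ^ jk *\<^sub>R d;
              csol = eta * Min {(4 / (sqrt ((zeta + 4 * tauhat)\<^sup>2 + 8 * LH) + (zeta + 4 * tauhat)))\<^sup>2,
                                9 * (1 - zeta - 2 * eta)\<^sup>2 * theta\<^sup>2 / LH\<^sup>2,
                                theta\<^sup>2,
                                (1 - zeta)\<^sup>2 * theta\<^sup>2 / (4 * (max (LH / 3) (2 * eta))\<^sup>2)}
          in phi f lam xk - phi f lam xk1 \<ge>
             csol * Min {(norm (restr (Inzeps epsg xk) (gmap Df lam xk1)))\<^sup>2 / epsh,
                         epsh ^ 3, epsg * epsh})"
proof -
  define I where "I = Inzeps epsg xk"
  define g where "g = restr I (geps Df lam epsg xk)"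
  define G where "G = norm g"
  define s where "s = tauk * G powr delta"
  define H where "H = (\<lambda>v. restr I (Hf xk *v v))"
  define Hb where "Hb = (\<lambda>v. H v + s *\<^sub>R v)"
  define N where "N = (norm d)^2"
  define nd where "nd = norm d"
  have Gg: "G > epsg" using inv3 unfolding G_def g_def I_def .
  have Gp: "G > 0" using Gg epsg by simp
  have sq0: "sqrt epsg > 0" using epsg by simp
  have Gd: "G powr delta > 0" using Gp by simp
  have s_lo: "s \<ge> 2 * epsh"
  proof -
    have "2 * epsh / G powr delta \<le> tauk" using tauk(1) unfolding G_def g_def I_def .
    then show ?thesis using Gd unfolding s_def by (simp add: pos_divide_le_eq)
  qed
  have s_hi: "s \<le> 2 * tauhat * epsh"
  proof -
    have "tauk \<le> 2 * tauhat * epsh / G powr delta" using tauk(2) unfolding G_def g_def I_def .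
    then show ?thesis using Gd unfolding s_def by (simp add: pos_le_divide_eq)
  qed
  have spos: "s > 0" using s_lo epsh by simp
  have sol': "capped_cg_sol H g epsh zeta delta tauk M d" using sol unfolding H_def g_def I_def .
  obtain j where j: "j \<ge> 1"
    and ncy: "\<not> (cg_y Hb g j \<bullet> Hb (cg_y Hb g j) < epsh * (norm (cg_y Hb g j))\<^sup>2)"
    and solj: "norm (cg_r Hb g j) \<le> zeta / (3 * ((cg_M H Hb g M j + s) / epsh)) * norm (cg_r Hb g 0)"
    and dj: "d = cg_y Hb g j"
    using sol' unfolding capped_cg_sol_def Let_def Hb_def s_def G_def by blast
  have H0: "H 0 = 0" unfolding H_def by (simp add: restr_zero)
  have Hb_add: "\<And>u v. Hb (u + v) = Hb u + Hb v"
    unfolding Hb_def H_def by (simp add: matrix_vector_right_distrib restr_add algebra_simps)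
  have Hb_scale: "\<And>c v. Hb (c *\<^sub>R v) = c *\<^sub>R Hb v"
    unfolding Hb_def H_def by (simp add: matrix_vector_mult_scaleR restr_scale algebra_simps)
  have Hb_supp: "\<And>v. supp I v \<Longrightarrow> supp I (Hb v)"
    unfolding Hb_def H_def by (intro supp_add supp_scale restr_supp)
  have gsupp: "supp I g" unfolding g_def by (rule restr_supp)
  have dsupp: "supp I d" using cg_supp[of I g Hb, OF gsupp Hb_supp] dj by blast
  define r where "r = cg_r Hb g j"
  have r_eq: "r = Hb d + g" unfolding r_def dj by (rule cg_res[OF Hb_add Hb_scale])
  have r0: "cg_r Hb g 0 = g" by (simp add: cg_iter_0)
  define Mj where "Mj = cg_M H Hb g M j"
  have Mj0: "Mj \<ge> 0" using cgM_ge[where H=H and Mz=M and Hb=Hb and g=g and j=j, OF H0] M unfolding Mj_def by simp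
  have HdM: "norm (H d) \<le> Mj * nd"
  proof -
    obtain j' where "j = Suc j'" using j by (cases j) auto
    then show ?thesis using cgM_y[where H=H and Hb=Hb and g=g and Mz=M and j=j', OF H0] unfolding Mj_def dj nd_def by simp
  qed
  define K where "K = Mj + s"
  have Kpos: "K > 0" and Ks: "K \<ge> 2 * epsh" using Mj0 spos s_lo unfolding K_def by auto
  define zh where "zh = zeta * epsh / (3 * K)"
  have zh_eq: "zeta / (3 * ((cg_M H Hb g M j + s) / epsh)) = zh"
    unfolding zh_def K_def Mj_def using epsh by (simp add: field_simps)
  have nr: "norm r \<le> zh * G" using solj unfolding zh_eq r0 G_def r_def .
  have zh_le: "zh \<le> zeta / 6"
  proof -
    have "zeta * epsh / (3 * K) \<le> zeta * epsh / (3 * (2 * epsh))"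
      using Ks zeta epsh by (intro divide_left_mono mult_left_mono) auto
    then show ?thesis unfolding zh_def using epsh by simp
  qed
  have zh0: "zh \<ge> 0" unfolding zh_def using zeta epsh Kpos by simp
  have nHb: "norm (Hb d) \<le> K * nd"
  proof -
    have "norm (Hb d) \<le> norm (H d) + norm (s *\<^sub>R d)" unfolding Hb_def by (rule norm_triangle_ineq)
    also have "\<dots> \<le> Mj * nd + s * nd" using HdM spos unfolding nd_def by simp
    finally show ?thesis unfolding K_def by (simp add: algebra_simps)
  qed
  have GKn: "5 / 6 * G \<le> K * nd"
  proof -
    have "g = r - Hb d" using r_eq by simp
    then have "G \<le> norm r + norm (Hb d)" unfolding G_def by (simp add: norm_triangle_ineq4)
    then have "G \<le> zh * G + K * nd" using nr nHb by linarith
    moreover have "zh * G \<le> zeta / 6 * G" using zh_le Gp by (intro mult_right_mono) auto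
    moreover have "zeta / 6 * G \<le> 1 / 6 * G" using zeta Gp by (intro mult_right_mono) auto
    ultimately show ?thesis by linarith
  qed
  have ndpos: "nd > 0"
  proof -
    have "K * nd > 0" using GKn Gp by linarith
    then show ?thesis using Kpos by (simp add: zero_less_mult_iff)
  qed
  have nr2: "norm r \<le> zeta / 2 * epsh * nd"
  proof -
    have "zh * G = zeta * epsh / 3 * (G / K)" unfolding zh_def by simp
    also have "G / K \<le> 6 / 5 * nd" using GKn Kpos by (simp add: divide_le_eq algebra_simps)
    then have "zeta * epsh / 3 * (G / K) \<le> zeta * epsh / 3 * (6 / 5 * nd)"
      using zeta epsh by (intro mult_left_mono) auto
    finally have "zh * G \<le> zeta * epsh / 3 * (6 / 5 * nd)" .
    moreover have "zeta * epsh * nd > 0" using zeta epsh ndpos by simp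
    ultimately show ?thesis using nr by (simp add: algebra_simps)
  qed
  define Q where "Q = d \<bullet> Hb d"
  have QN: "Q \<ge> epsh * N" using ncy unfolding Q_def N_def dj by simp
  have Nnd: "N = nd^2" unfolding N_def nd_def ..
  have dr: "d \<bullet> r \<le> zeta / 2 * epsh * N"
  proof -
    have "d \<bullet> r \<le> nd * norm r" unfolding nd_def by (rule norm_cauchy_schwarz)
    also have "\<dots> \<le> nd * (zeta / 2 * epsh * nd)" using nr2 ndpos by (intro mult_left_mono) auto
    finally show ?thesis unfolding Nnd by (simp add: power2_eq_square algebra_simps)
  qed
  have gd: "g \<bullet> d = d \<bullet> r - Q" unfolding Q_def r_eq by (simp add: inner_add_right inner_commute)
  have dHd: "d \<bullet> (Hf xk *v d) = Q - s * N"
  proof -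
    have "Q = d \<bullet> H d + s * (d \<bullet> d)" unfolding Q_def Hb_def by (simp add: inner_add_right)
    also have "d \<bullet> H d = d \<bullet> (Hf xk *v d)" unfolding H_def by (rule supp_inner_restr[OF dsupp])
    also have "d \<bullet> d = N" unfolding N_def by (simp add: power2_norm_eq_inner)
    finally show ?thesis by simp
  qed
  define sg where "sg = (\<lambda>i. if xk$i > 0 then 1 else (-1::real))"
  define sig where "sig = (\<Sum>i\<in>UNIV. sg i * d$i)"
  have dI: "\<And>i. i \<notin> I \<Longrightarrow> d$i = 0" using dsupp unfolding supp_def by blast
  have xI: "\<And>i. i \<in> I \<Longrightarrow> \<bar>xk$i\<bar> > sqrt epsg" unfolding I_def Inzeps_def by simp
  have ga: "g \<bullet> d = Df xk \<bullet> d + lam * sig"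
  proof -
    have "g \<bullet> d = (\<Sum>i\<in>UNIV. g$i * d$i)" by (simp add: inner_vec_def)
    also have "\<dots> = (\<Sum>i\<in>UNIV. Df xk $ i * d$i + lam * (sg i * d$i))"
    proof (intro sum.cong refl)
      fix i
      show "g$i * d$i = Df xk $ i * d$i + lam * (sg i * d$i)"
      proof (cases "i \<in> I")
        case True
        have "\<bar>xk$i\<bar> > sqrt epsg" using xI True .
        moreover have "sqrt epsg \<ge> 0" using epsg by simp
        ultimately have "xk$i > sqrt epsg \<or> xk$i < - sqrt epsg" by linarith
        then show ?thesis
        proof
          assume a: "xk$i > sqrt epsg"
          then have "xk$i > 0" using sq0 by linarith
          then show ?thesis using a True unfolding g_def restr_def geps_def sg_def
            by (simp add: algebra_simps)
        next
          assume a: "xk$i < - sqrt epsg"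
          then have "\<not> xk$i > 0" "\<not> xk$i > sqrt epsg" using sq0 by linarith+
          then show ?thesis using a True unfolding g_def restr_def geps_def sg_def
            by (simp add: algebra_simps)
        qed
      next
        case False then show ?thesis using dI by simp
      qed
    qed
    also have "\<dots> = Df xk \<bullet> d + lam * sig"
      by (simp add: sum.distrib sum_distrib_left inner_vec_def sig_def)
    finally show ?thesis .
  qed
  have compd: "\<And>i t. \<bar>t * d$i\<bar> \<le> \<bar>t\<bar> * nd"
    unfolding nd_def by (simp add: abs_mult mult_left_mono component_le_norm_cart)
  have l1: "\<And>t. \<bar>t\<bar> * nd \<le> sqrt epsg \<Longrightarrow> l1norm (xk + t *\<^sub>R d) = l1norm xk + t * sig"
  proof -
    fix t assume t: "\<bar>t\<bar> * nd \<le> sqrt epsg"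
    have "\<And>i. \<bar>xk$i + t * d$i\<bar> = \<bar>xk$i\<bar> + t * (sg i * d$i)"
    proof -
      fix i
      show "\<bar>xk$i + t * d$i\<bar> = \<bar>xk$i\<bar> + t * (sg i * d$i)"
      proof (cases "i \<in> I")
        case True
        have "\<bar>t * d$i\<bar> < \<bar>xk$i\<bar>" using compd[of t i] t xI[OF True] by linarith
        then show ?thesis unfolding sg_def by (auto simp: abs_if algebra_simps)
      next
        case False then show ?thesis using dI by simp
      qed
    qed
    then show "l1norm (xk + t *\<^sub>R d) = l1norm xk + t * sig"
      unfolding l1norm_def sig_def by (simp add: sum.distrib sum_distrib_left)
  qed
  define h2 where "h2 = (\<lambda>t. f (xk + t *\<^sub>R d) + lam * (l1norm xk + t * sig))"
  have h2phi: "\<And>t. \<bar>t\<bar> * nd \<le> sqrt epsg \<Longrightarrow> phi f lam (xk + t *\<^sub>R d) = h2 t"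
    unfolding h2_def phi_def using l1 by simp
  have h2d: "\<And>t. (h2 has_real_derivative (Df (xk + t *\<^sub>R d) \<bullet> d + lam * sig)) (at t)"
  proof -
    fix t
    have ln: "((\<lambda>t. xk + t *\<^sub>R d) has_derivative (\<lambda>h. h *\<^sub>R d)) (at t)"
      by (auto intro!: derivative_eq_intros)
    have "((\<lambda>t. f (xk + t *\<^sub>R d)) has_derivative (\<lambda>h. Df (xk + t *\<^sub>R d) \<bullet> (h *\<^sub>R d))) (at t)"
      by (rule has_derivative_compose[OF ln grad])
    then have "((\<lambda>t. f (xk + t *\<^sub>R d)) has_real_derivative (Df (xk + t *\<^sub>R d) \<bullet> d)) (at t)"
      by (rule has_derivative_imp_has_field_derivative) simp
    moreover have "((\<lambda>t. lam * (l1norm xk + t * sig)) has_real_derivative (lam * sig)) (at t)"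
      by (auto intro!: derivative_eq_intros)
    ultimately show "(h2 has_real_derivative (Df (xk + t *\<^sub>R d) \<bullet> d + lam * sig)) (at t)"
      unfolding h2_def by (rule DERIV_add)
  qed
  have h2c: "\<And>a b. continuous_on {a..b} h2"
    using h2d by (meson DERIV_isCont continuous_at_imp_continuous_on)
  define c where "c = 3 * (1 - zeta - 2 * eta) * epsh / LH"
  have ze: "1 - zeta - 2 * eta > 0" using eta by simp
  have c_pos: "c > 0" unfolding c_def using ze epsh cpos by simp
  have KEY: "\<And>t. 0 < t \<Longrightarrow> t \<le> 1 \<Longrightarrow> t * nd \<le> c \<Longrightarrow> t * nd \<le> sqrt epsg \<Longrightarrow>
      xk + t *\<^sub>R d \<in> levelset f lam x0 \<Longrightarrow>
      phi f lam (xk + t *\<^sub>R d) < phi f lam xk - eta * t^2 * epsh * N"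
  proof -
    fix t assume t: "0 < t" "t \<le> 1" "t * nd \<le> c" "t * nd \<le> sqrt epsg"
      and lv: "xk + t *\<^sub>R d \<in> levelset f lam x0"
    have T: "f (xk + t *\<^sub>R d) \<le> f xk + Df xk \<bullet> (t *\<^sub>R d) + 1/2 * ((t *\<^sub>R d) \<bullet> (Hf xk *v (t *\<^sub>R d)))
                     + LH / 6 * (norm (t *\<^sub>R d)) ^ 3"
      using LH2[OF xk lv] by simp
    have e1: "Df xk \<bullet> (t *\<^sub>R d) = t * (Df xk \<bullet> d)" by simp
    have e2: "(t *\<^sub>R d) \<bullet> (Hf xk *v (t *\<^sub>R d)) = t^2 * (Q - s * N)"
      using dHd by (simp add: matrix_vector_mult_scaleR power2_eq_square)
    have e3: "(norm (t *\<^sub>R d)) ^ 3 = t^3 * nd^3" using t unfolding nd_def by (simp add: power_mult_distrib)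
    have "phi f lam (xk + t *\<^sub>R d) = f (xk + t *\<^sub>R d) + lam * (l1norm xk + t * sig)"
      using h2phi[of t] t unfolding h2_def by simp
    also have "\<dots> \<le> phi f lam xk + t * (g \<bullet> d) + 1/2 * (t^2 * (Q - s * N)) + LH / 6 * (t^3 * nd^3)"
    proof -
      have T': "f (xk + t *\<^sub>R d) \<le> f xk + t * (Df xk \<bullet> d) + 1/2 * (t^2 * (Q - s * N)) + LH / 6 * (t^3 * nd^3)"
        using T unfolding e1 e2 e3 .
      have "t * (g \<bullet> d) = t * (Df xk \<bullet> d) + lam * (t * sig)" by (simp add: ga algebra_simps)
      moreover have "phi f lam xk = f xk + lam * l1norm xk" by (simp add: phi_def)
      moreover have "lam * (l1norm xk + t * sig) = lam * l1norm xk + lam * (t * sig)" by (simp add: algebra_simps)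
      ultimately show ?thesis using T' by linarith
    qed
    also have "\<dots> = phi f lam xk + (t * (d \<bullet> r) - t * Q + t^2 / 2 * (Q - s * N) + LH / 6 * t^3 * nd^3)"
      unfolding gd by (simp add: field_simps)
    also have "\<dots> < phi f lam xk + (- eta * t^2 * epsh * N)"
      using key_arith[OF t(1,2) Nnd ndpos QN spos epsh(1) dr cpos(2) t(3)[unfolded c_def] zeta eta(1) ze]
      by simp
    finally show "phi f lam (xk + t *\<^sub>R d) < phi f lam xk - eta * t^2 * epsh * N" by simp
  qed
  have phi0: "phi f lam xk \<le> phi f lam x0" using xk unfolding levelset_def by simp
  have D0: "Df (xk + 0 *\<^sub>R d) \<bullet> d + lam * sig < 0"
  proof -
    have "Df (xk + 0 *\<^sub>R d) \<bullet> d + lam * sig = d \<bullet> r - Q" using ga gd by simp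
    moreover have "zeta / 2 * epsh * N < epsh * N"
      using zeta epsh ndpos Nnd by (simp add: mult_strict_right_mono)
    ultimately show ?thesis using dr QN by linarith
  qed
  have SEG: "\<And>t. 0 < t \<Longrightarrow> t \<le> 1 \<Longrightarrow> t * nd \<le> c \<Longrightarrow> t * nd \<le> sqrt epsg \<Longrightarrow>
      xk + t *\<^sub>R d \<in> levelset f lam x0"
  proof (rule ccontr)
    fix t assume t: "0 < t" "t \<le> 1" "t * nd \<le> c" "t * nd \<le> sqrt epsg"
      and nl: "xk + t *\<^sub>R d \<notin> levelset f lam x0"
    have ht: "h2 t > phi f lam x0" using nl h2phi[of t] t unfolding levelset_def by simp
    have h0: "h2 0 \<le> phi f lam x0" using h2phi[of 0] phi0 sq0 by simp
    obtain dl where dl: "dl > 0" "\<And>h. h > 0 \<Longrightarrow> h < dl \<Longrightarrow> h2 0 > h2 (0 + h)"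
      using DERIV_neg_dec_right[OF h2d[of 0] D0] by blast
    define u where "u = min (dl / 2) (t / 2)"
    have u: "u > 0" "u < dl" "u < t" unfolding u_def using dl t by auto
    have hu: "h2 u < phi f lam x0" using dl(2)[OF u(1,2)] h0 by simp
    obtain z where z: "u \<le> z" "z \<le> t" "h2 z = phi f lam x0"
      using IVT'[of h2 u "phi f lam x0" t] hu ht u h2c by auto
    have zp: "0 < z" using z u by simp
    have znd: "z * nd \<le> t * nd" using z ndpos by (simp add: mult_right_mono)
    have zphi: "phi f lam (xk + z *\<^sub>R d) = phi f lam x0"
      using h2phi[of z] z zp znd t by simp
    then have "xk + z *\<^sub>R d \<in> levelset f lam x0" unfolding levelset_def by simp
    then have "phi f lam (xk + z *\<^sub>R d) < phi f lam xk - eta * z^2 * epsh * N"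
      using KEY[of z] zp z t znd by simp
    moreover have "eta * z^2 * epsh * N \<ge> 0" using eta epsh Nnd by simp
    ultimately show False using zphi phi0 by linarith
  qed
  define m where "m = min c (sqrt epsg)"
  have mpos: "m > 0" unfolding m_def using c_pos sq0 by simp
  define P where "P = (\<lambda>j::nat. phi f lam (xk + theta ^ j *\<^sub>R d)
                    < phi f lam xk - eta * theta ^ (2 * j) * epsh * (norm d)\<^sup>2)"
  have pw2: "\<And>j. theta ^ (2 * j) = (theta ^ j)^2" by (simp add: power_mult[symmetric] mult.commute)
  have PJ: "\<And>j. theta ^ j * nd \<le> m \<Longrightarrow> P j"
  proof -
    fix j assume a: "theta ^ j * nd \<le> m"
    have t: "0 < theta ^ j" "theta ^ j \<le> 1" using theta by (auto simp: power_le_one)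
    have b: "theta ^ j * nd \<le> c" "theta ^ j * nd \<le> sqrt epsg" using a unfolding m_def by auto
    show "P j" using KEY[OF t b SEG[OF t b]] unfolding P_def pw2 N_def by simp
  qed
  obtain n where n: "theta ^ n < m / nd" using real_arch_pow_inv[of "m / nd" theta] mpos ndpos theta by auto
  have n': "theta ^ n * nd \<le> m" using n ndpos by (simp add: pos_less_divide_eq less_imp_le)
  define J where "J = (LEAST j. theta ^ j * nd \<le> m)"
  have J: "theta ^ J * nd \<le> m" unfolding J_def by (rule LeastI[of _ n], rule n')
  have exP: "\<exists>j. P j" using PJ[OF J] by blast
  define jk where "jk = (LEAST j. P j)"
  have Pjk: "P jk" unfolding jk_def using exP by (rule LeastI_ex)
  have jkJ: "jk \<le> J" unfolding jk_def by (rule Least_le, rule PJ[OF J])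
  define xk1 where "xk1 = xk + theta ^ jk *\<^sub>R d"
  define Dc where "Dc = phi f lam xk - phi f lam xk1"
  have Dgt: "Dc > eta * theta ^ (2 * jk) * epsh * N" using Pjk unfolding P_def Dc_def xk1_def N_def by simp
  have thJ: "theta ^ (2 * J) \<le> theta ^ (2 * jk)" using theta jkJ by (intro power_decreasing) auto
  have DJ: "Dc > eta * theta ^ (2 * J) * epsh * N"
  proof -
    have "eta * theta ^ (2 * J) * epsh * N \<le> eta * theta ^ (2 * jk) * epsh * N"
      using thJ eta epsh Nnd by (intro mult_right_mono mult_left_mono) auto
    then show ?thesis using Dgt by linarith
  qed
  have xk1lv: "xk1 \<in> levelset f lam x0"
  proof -
    have "eta * theta ^ (2 * jk) * epsh * N \<ge> 0" using eta epsh theta Nnd by simp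
    then show ?thesis using Dgt phi0 unfolding Dc_def levelset_def by simp
  qed
  define A where "A = (norm (restr I (gmap Df lam xk1)))\<^sup>2 / epsh"
  define mn where "mn = Min {A, epsh ^ 3, epsg * epsh}"
  have mn_eq: "mn = min A (min (epsh ^ 3) (epsg * epsh))" unfolding mn_def by simp
  have A0: "A \<ge> 0" unfolding A_def using epsh by simp
  have mn0: "mn \<ge> 0" unfolding mn_eq using A0 epsh epsg by simp
  define B where "B = zeta + 4 * tauhat"
  define u0 where "u0 = 4 / (sqrt (B\<^sup>2 + 8 * LH) + B)"
  define CS where "CS = eta * Min {(4 / (sqrt ((zeta + 4 * tauhat)\<^sup>2 + 8 * LH) + (zeta + 4 * tauhat)))\<^sup>2,
                                9 * (1 - zeta - 2 * eta)\<^sup>2 * theta\<^sup>2 / LH\<^sup>2,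
                                theta\<^sup>2,
                                (1 - zeta)\<^sup>2 * theta\<^sup>2 / (4 * (max (LH / 3) (2 * eta))\<^sup>2)}"
  have CS1: "CS \<le> eta * u0^2" unfolding CS_def u0_def B_def using eta by (intro mult_left_mono) auto
  have CS2: "CS \<le> eta * (9 * (1 - zeta - 2 * eta)\<^sup>2 * theta\<^sup>2 / LH\<^sup>2)" unfolding CS_def using eta by (intro mult_left_mono) auto
  have CS3: "CS \<le> eta * theta\<^sup>2" unfolding CS_def using eta by (intro mult_left_mono) auto
  have final: "Dc \<ge> CS * mn"
  proof (cases J)
    case 0
    have ndm: "nd \<le> m" using J 0 by simp
    have jk0: "jk = 0" using jkJ 0 by simp
    have x1: "xk1 = xk + d" unfolding xk1_def jk0 by simp
    have ndsq: "nd \<le> sqrt epsg" using ndm unfolding m_def by simp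
    define E where "E = Hf xk *v (xk1 - xk) - (Df xk1 - Df xk)"
    have nE: "norm E \<le> LH / 2 * N" using LH1[OF xk xk1lv] unfolding E_def N_def nd_def x1 by simp
    have gp: "restr I (gmap Df lam xk1) = restr I (Df xk1 - Df xk) + g"
    proof -
      have "\<And>i. restr I (gmap Df lam xk1) $ i = (restr I (Df xk1 - Df xk) + g) $ i"
      proof -
        fix i
        show "restr I (gmap Df lam xk1) $ i = (restr I (Df xk1 - Df xk) + g) $ i"
        proof (cases "i \<in> I")
          case True
          have lt: "\<bar>d$i\<bar> < \<bar>xk$i\<bar>" using compd[of 1 i] ndsq xI[OF True] by simp
          have "\<bar>xk$i\<bar> > sqrt epsg" using xI True .
          then have "xk$i > sqrt epsg \<or> xk$i < - sqrt epsg" using sq0 by linarith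
          then show ?thesis
          proof
            assume a: "xk$i > sqrt epsg"
            then have "xk1$i > 0" using lt sq0 unfolding x1 by simp
            then show ?thesis using a True unfolding g_def restr_def geps_def gmap_def
              by (simp add: algebra_simps)
          next
            assume a: "xk$i < - sqrt epsg"
            then have "xk1$i < 0" using lt sq0 unfolding x1 by simp
            moreover have "\<not> xk$i > sqrt epsg" using a sq0 by linarith
            ultimately show ?thesis using a True unfolding g_def restr_def geps_def gmap_def
              by (simp add: algebra_simps)
          qed
        next
          case False then show ?thesis unfolding restr_def g_def by simp
        qed
      qed
      then show ?thesis by (simp add: vec_eq_iff)
    qed
    have "restr I (Df xk1 - Df xk) = H d - restr I E"
      unfolding E_def H_def x1 by (simp add: restr_diff)
    also have "H d = r - g - s *\<^sub>R d" using r_eq unfolding Hb_def by simp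
    finally have gp2: "restr I (gmap Df lam xk1) = r - s *\<^sub>R d - restr I E" using gp by simp
    define ngp where "ngp = norm (restr I (gmap Df lam xk1))"
    have n1: "ngp \<le> norm r + norm (s *\<^sub>R d) + norm (restr I E)"
      unfolding ngp_def gp2 by (metis norm_triangle_ineq4 norm_triangle_ineq order_trans add_right_mono)
    have n2: "norm (s *\<^sub>R d) \<le> 2 * tauhat * epsh * nd" using spos s_hi ndpos unfolding nd_def by (simp add: mult_right_mono)
    have n3: "norm (restr I E) \<le> LH / 2 * N" using nE norm_restr_le order_trans by blast
    have n4: "LH / 2 * nd^2 + B / 2 * epsh * nd = LH / 2 * N + zeta / 2 * epsh * nd + 2 * tauhat * epsh * nd"
      unfolding B_def Nnd by (simp add: algebra_simps)
    have ngb: "ngp \<le> LH / 2 * nd^2 + B / 2 * epsh * nd" using n1 n2 n3 n4 nr2 by linarith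
    have Bpos: "B > 0" unfolding B_def using zeta tauhat by simp
    have "B\<^sup>2 + 8 * LH \<ge> 0" using cpos(2) by (smt (verit) zero_le_power2)
    then have "sqrt (B\<^sup>2 + 8 * LH) \<ge> 0" by simp
    then have "sqrt (B\<^sup>2 + 8 * LH) + B > 0" using Bpos by linarith
    then have u0pos: "u0 > 0" unfolding u0_def by simp
    have u0e: "LH / 2 * u0^2 + B / 2 * u0 = 1" unfolding u0_def by (rule u0_eq[OF Bpos cpos(2)])
    have f0: "u0^2 * min (ngp^2 / epsh) (epsh^3) \<le> epsh * nd^2"
      by (rule fin0[OF u0pos u0e epsh(1) _ _ ngb _ cpos(2)]) (use ndpos Bpos in \<open>auto simp: ngp_def\<close>)
    have "CS * mn \<le> eta * u0^2 * mn" using CS1 mn0 by (rule mult_right_mono)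
    also have "\<dots> \<le> eta * (u0^2 * min (ngp^2 / epsh) (epsh^3))"
      unfolding mn_eq A_def ngp_def using eta by (simp add: mult_left_mono min.coboundedI1 min.coboundedI2)
    also have "\<dots> \<le> eta * (epsh * nd^2)" using f0 eta by (intro mult_left_mono) auto
    also have "\<dots> = eta * theta ^ (2 * J) * epsh * N" using 0 Nnd by simp
    finally show ?thesis using DJ by linarith
  next
    case (Suc J')
    have "\<not> theta ^ J' * nd \<le> m" unfolding J_def using Suc J_def not_less_Least[of J' "\<lambda>j. theta ^ j * nd \<le> m"] by simp
    then have a: "theta ^ J' * nd > m" by simp
    have "theta ^ J * nd = theta * (theta ^ J' * nd)" using Suc by simp
    also have "\<dots> \<ge> theta * m" using a theta by (intro mult_left_mono) auto
    finally have "theta * m \<le> theta ^ J * nd" .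
    then have "(theta * m)^2 \<le> (theta ^ J * nd)^2" using theta mpos by (intro power_mono) auto
    then have "eta * epsh * (theta * m)^2 \<le> eta * epsh * (theta ^ J * nd)^2" using eta epsh by (intro mult_left_mono) auto
    also have "\<dots> = eta * theta ^ (2 * J) * epsh * N" unfolding pw2 Nnd by (simp add: power_mult_distrib)
    finally have Dm: "Dc > eta * epsh * (theta * m)^2" using DJ by linarith
    show ?thesis
    proof (cases "c \<le> sqrt epsg")
      case True
      then have "m = c" unfolding m_def by simp
      have "CS * mn \<le> eta * (9 * (1 - zeta - 2 * eta)\<^sup>2 * theta\<^sup>2 / LH\<^sup>2) * mn" using CS2 mn0 by (rule mult_right_mono)
      also have "\<dots> \<le> eta * (9 * (1 - zeta - 2 * eta)\<^sup>2 * theta\<^sup>2 / LH\<^sup>2) * epsh ^ 3"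
        using eta by (intro mult_left_mono) (auto simp: mn_eq)
      also have "\<dots> = eta * epsh * (theta * m)^2" unfolding \<open>m = c\<close> c_def using cpos
        by (simp add: field_simps power2_eq_square power3_eq_cube)
      finally show ?thesis using Dm by linarith
    next
      case False
      then have "m = sqrt epsg" unfolding m_def by simp
      have "CS * mn \<le> eta * theta\<^sup>2 * mn" using CS3 mn0 by (rule mult_right_mono)
      also have "\<dots> \<le> eta * theta\<^sup>2 * (epsg * epsh)"
        using eta by (intro mult_left_mono) (auto simp: mn_eq)
      also have "\<dots> = eta * epsh * (theta * m)^2" unfolding \<open>m = sqrt epsg\<close> using epsg
        by (simp add: power_mult_distrib)
      finally show ?thesis using Dm by linarith
    qed
  qed
  show ?thesis
    unfolding Let_def using exP final unfolding P_def jk_def xk1_def CS_def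
      Dc_def A_def mn_def I_def by simp
qed


end
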